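(* Let $X=(X,\preceq,\delta)$ be a labeled poset, $Y\subset X$ and $\overline X\in\operatorname{Tot}(X)$, and put $W=P_Y(\overline X)$. Then the relation $\sim_T$ on $P_Y^{-1}(W)$, defined by $\overline X'\sim_T\overline X''$ if and only if $\overline X'=T_{Y_1,Y_2}(\overline X'')$ for some $Y_1,Y_2\in\operatorname{Tot}(Y)$, is an equivalence relation.
   Context: A labeled poset is $(X,\preceq,\delta)$ with $X$ finite, $\preceq$ a partial order and $\delta$ a labeling map; $Y\subset X$ carries the restricted order and labeling. $\operatorname{Tot}(X)$ is the set of $(X,\preceq',\delta)$ with $\preceq'\supseteq\preceq$ a total order. $P_Y:\operatorname{Tot}(X)\to\operatorname{Tot}(X\setminus Y)$ sends a total order on $X$ to its restriction to $X\setminus Y$, and $P_Y^{-1}(W)$ is the set of $\overline X\in\operatorname{Tot}(X)$ whose restriction to $X\setminus Y$ is $W$. For $Y_1,Y_2\in\operatorname{Tot}(Y)$ with orders $\preceq_{Y_1},\preceq_{Y_2}$ and a total order $\overline X=(X,\preceq_{\overline X},\delta)$, $T_{Y_1,Y_2}(\overline X)=(X,(\preceq_{\overline X}\setminus\preceq_{Y_1})\cup\preceq_{Y_2},\delta)$. *)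

theory Defs
  imports Main
begin

text \<open>A labeled poset (X, \<preceq>, \<delta>): carrier, order relation (as a set of pairs), labeling.\<close>
type_synonym ('a, 'l) lposet = "'a set \<times> ('a \<times> 'a) set \<times> ('a \<Rightarrow> 'l)"

definition is_partial_order :: "'a set \<Rightarrow> ('a \<times> 'a) set \<Rightarrow> bool" where
  "is_partial_order X R \<longleftrightarrow> R \<subseteq> X \<times> X \<and> (\<forall>x\<in>X. (x, x) \<in> R)
     \<and> antisym R \<and> trans R"

definition is_total_order :: "'a set \<Rightarrow> ('a \<times> 'a) set \<Rightarrow> bool" where
  "is_total_order X R \<longleftrightarrow> is_partial_order X R
     \<and> (\<forall>x\<in>X. \<forall>y\<in>X. (x, y) \<in> R \<or> (y, x) \<in> R)"

definition labeled_poset :: "('a, 'l) lposet \<Rightarrow> bool" where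
  "labeled_poset P \<longleftrightarrow> (case P of (X, R, \<delta>) \<Rightarrow> finite X \<and> is_partial_order X R)"

definition sub_lposet :: "('a, 'l) lposet \<Rightarrow> 'a set \<Rightarrow> ('a, 'l) lposet" where
  "sub_lposet P Y = (case P of (X, R, \<delta>) \<Rightarrow> (Y, R \<inter> (Y \<times> Y), \<delta>))"

definition Tot :: "('a, 'l) lposet \<Rightarrow> ('a, 'l) lposet set" where
  "Tot P = (case P of (X, R, \<delta>) \<Rightarrow>
      {(X, R', \<delta>) | R'. R \<subseteq> R' \<and> is_total_order X R'})"

definition proj :: "'a set \<Rightarrow> ('a, 'l) lposet \<Rightarrow> ('a, 'l) lposet" where
  "proj Y Q = (case Q of (X, R, \<delta>) \<Rightarrow> sub_lposet Q (X - Y))"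

definition proj_inv :: "('a, 'l) lposet \<Rightarrow> 'a set \<Rightarrow> ('a, 'l) lposet \<Rightarrow> ('a, 'l) lposet set" where
  "proj_inv P Y W = {Q \<in> Tot P. proj Y Q = W}"

definition T_op :: "('a, 'l) lposet \<Rightarrow> ('a, 'l) lposet \<Rightarrow> ('a, 'l) lposet \<Rightarrow> ('a, 'l) lposet" where
  "T_op Y1 Y2 Q = (case Q of (X, R, \<delta>) \<Rightarrow> (X, (R - fst (snd Y1)) \<union> fst (snd Y2), \<delta>))"

definition sim_T :: "('a, 'l) lposet \<Rightarrow> 'a set \<Rightarrow> ('a, 'l) lposet \<Rightarrow> (('a, 'l) lposet \<times> ('a, 'l) lposet) set" where
  "sim_T P Y W = {(A, B). A \<in> proj_inv P Y W \<and> B \<in> proj_inv P Y W \<and>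
      (\<exists>Y1\<in>Tot (sub_lposet P Y). \<exists>Y2\<in>Tot (sub_lposet P Y). A = T_op Y1 Y2 B)}"

end

theory Submission
  imports Defs
begin

lemma restr_total:
  assumes "is_total_order X R'" "Y \<subseteq> X"
  shows "is_total_order Y (R' \<inter> (Y \<times> Y))"
  using assms unfolding is_total_order_def is_partial_order_def antisym_def trans_def
  by blast

lemma tot_rel_sub:
  assumes "Q \<in> Tot (sub_lposet (X, R, \<delta>) Y)"
  shows "fst (snd Q) \<subseteq> Y \<times> Y"
  using assms unfolding Tot_def sub_lposet_def is_total_order_def is_partial_order_def
  by auto

lemma char:
  assumes "Y \<subseteq> X"
  shows "(A, B) \<in> sim_T (X, R, \<delta>) Y W \<longleftrightarrow>
     A \<in> proj_inv (X, R, \<delta>) Y W \<and> B \<in> proj_inv (X, R, \<delta>) Y W \<and>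
     fst (snd A) - Y \<times> Y = fst (snd B) - Y \<times> Y"
proof
  assume h: "(A, B) \<in> sim_T (X, R, \<delta>) Y W"
  then obtain Y1 Y2 where y1: "Y1 \<in> Tot (sub_lposet (X, R, \<delta>) Y)"
    and y2: "Y2 \<in> Tot (sub_lposet (X, R, \<delta>) Y)" and e: "A = T_op Y1 Y2 B"
    and a: "A \<in> proj_inv (X, R, \<delta>) Y W" and b: "B \<in> proj_inv (X, R, \<delta>) Y W"
    unfolding sim_T_def by blast
  have s1: "fst (snd Y1) \<subseteq> Y \<times> Y" and s2: "fst (snd Y2) \<subseteq> Y \<times> Y"
    using tot_rel_sub y1 y2 by blast+
  obtain XB RB dB where bb: "B = (XB, RB, dB)" by (cases B) auto
  have "fst (snd A) = (RB - fst (snd Y1)) \<union> fst (snd Y2)"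
    using e bb by (simp add: T_op_def)
  then have "fst (snd A) - Y \<times> Y = fst (snd B) - Y \<times> Y" using s1 s2 bb by auto
  then show "A \<in> proj_inv (X, R, \<delta>) Y W \<and> B \<in> proj_inv (X, R, \<delta>) Y W \<and>
     fst (snd A) - Y \<times> Y = fst (snd B) - Y \<times> Y" using a b by blast
next
  assume h: "A \<in> proj_inv (X, R, \<delta>) Y W \<and> B \<in> proj_inv (X, R, \<delta>) Y W \<and>
     fst (snd A) - Y \<times> Y = fst (snd B) - Y \<times> Y"
  then obtain RA where ra: "A = (X, RA, \<delta>)" "R \<subseteq> RA" "is_total_order X RA"
    unfolding proj_inv_def Tot_def by auto
  obtain RB where rb: "B = (X, RB, \<delta>)" "R \<subseteq> RB" "is_total_order X RB"
    using h unfolding proj_inv_def Tot_def by auto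
  define Y1 where "Y1 = (Y, RB \<inter> (Y \<times> Y), \<delta>)"
  define Y2 where "Y2 = (Y, RA \<inter> (Y \<times> Y), \<delta>)"
  have "Y1 \<in> Tot (sub_lposet (X, R, \<delta>) Y)"
    using rb restr_total[OF rb(3) assms] unfolding Y1_def Tot_def sub_lposet_def by auto
  moreover have "Y2 \<in> Tot (sub_lposet (X, R, \<delta>) Y)"
    using ra restr_total[OF ra(3) assms] unfolding Y2_def Tot_def sub_lposet_def by auto
  moreover have "A = T_op Y1 Y2 B"
  proof -
    have "RA - Y \<times> Y = RB - Y \<times> Y" using h ra rb by simp
    then have "RA = (RB - RB \<inter> (Y \<times> Y)) \<union> (RA \<inter> (Y \<times> Y))" by blast
    then show ?thesis using ra rb unfolding Y1_def Y2_def T_op_def by simp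
  qed
  ultimately show "(A, B) \<in> sim_T (X, R, \<delta>) Y W" using h unfolding sim_T_def by blast
qed

theorem mainTheorem4:
  fixes P :: "('a, 'l) lposet" and Y :: "'a set" and Xbar :: "('a, 'l) lposet"
  assumes "labeled_poset P"
    and "Y \<subseteq> fst P"
    and "Xbar \<in> Tot P"
    and "W = proj Y Xbar"
  shows "equiv (proj_inv P Y W) (sim_T P Y W)"
proof -
  obtain X R \<delta> where p: "P = (X, R, \<delta>)" by (cases P) auto
  have yx: "Y \<subseteq> X" using assms(2) p by simp
  have c: "\<And>A B. (A, B) \<in> sim_T P Y W \<longleftrightarrow>
     A \<in> proj_inv P Y W \<and> B \<in> proj_inv P Y W \<and>
     fst (snd A) - Y \<times> Y = fst (snd B) - Y \<times> Y"
    using char[OF yx] p by simp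
  have sub: "sim_T P Y W \<subseteq> proj_inv P Y W \<times> proj_inv P Y W"
    unfolding sim_T_def by blast
  have r: "\<forall>x\<in>proj_inv P Y W. (x, x) \<in> sim_T P Y W" using c by blast
  have sy: "\<forall>x y. (x, y) \<in> sim_T P Y W \<longrightarrow> (y, x) \<in> sim_T P Y W" using c by metis
  have tr: "\<forall>x y z. (x, y) \<in> sim_T P Y W \<longrightarrow> (y, z) \<in> sim_T P Y W \<longrightarrow> (x, z) \<in> sim_T P Y W"
    using c by metis
  show ?thesis
    unfolding equiv_def refl_on_def sym_def trans_def
    using sub r sy tr by blast
qed

end
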